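(* Let $V$ be a finite ground set with $n=|V|$, let $f:2^V\to\mathbb{R}_{\ge 0}$ be monotone submodular, let $k\ge 1$ be an integer with $n\ge 16k$, and let $OPT=\max_{A\subseteq V,|A|\le k} f(A)$. Let $\tau=\frac{OPT}{2k}$. Draw a random set $S\subseteq V$ containing each element independently with probability $p=4\sqrt{k/n}$, and partition $V$ at random into sets $V_1,\dots,V_m$. Let $G_0=\textsc{ThresholdGreedy}(S,\emptyset,\tau)$, and for each $i$ let $R_i=\textsc{ThresholdFilter}(V_i,G_0,\tau)$ if $|G_0|<k$ and $R_i=\emptyset$ otherwise (the sets $R_i$ are the elements sent to the central machine). Then there is an absolute constant $c>0$ such that, with probability at least $1-e^{-ck}$, the number of elements sent to the central machine satisfies $\big|\bigcup_{i=1}^m R_i\big|\le\sqrt{nk}$.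
   Context: A function $f:2^V\to\mathbb{R}_{\ge0}$ is submodular if $f(A\cup\{e\})-f(A)\ge f(B\cup\{e\})-f(B)$ for all $A\subseteq B\subseteq V$ and $e\notin B$, and monotone if $f(A\cup\{e\})-f(A)\ge 0$ for all $A$ and $e\notin A$. For $A\subseteq V$, $e\in V$ write $f_A(e)=f(A\cup\{e\})-f(A)$. Fix a total order on $V$; all sets are scanned in this order. $\textsc{ThresholdGreedy}(T,G,\tau)$: start with $G'=G$; scan $e\in T$ in the fixed order, and whenever $f_{G'}(e)\ge\tau$ and $|G'|<k$, add $e$ to $G'$; return $G'$. $\textsc{ThresholdFilter}(T,G,\tau)$ returns $\{e\in T: f_G(e)\ge\tau\}$. Here $m$ is the number of machines (the paper takes $m=\sqrt{n/k}$). *)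

theory Defs
  imports "HOL-Probability.Probability"
begin

definition marg :: "(nat set \<Rightarrow> real) \<Rightarrow> nat set \<Rightarrow> nat \<Rightarrow> real" where
  "marg f A e = f (A \<union> {e}) - f A"

definition nonneg_on :: "nat set \<Rightarrow> (nat set \<Rightarrow> real) \<Rightarrow> bool" where
  "nonneg_on V f \<longleftrightarrow> (\<forall>A. A \<subseteq> V \<longrightarrow> f A \<ge> 0)"

definition monotone_set_fun :: "nat set \<Rightarrow> (nat set \<Rightarrow> real) \<Rightarrow> bool" where
  "monotone_set_fun V f \<longleftrightarrow> (\<forall>A e. A \<subseteq> V \<longrightarrow> e \<in> V \<longrightarrow> e \<notin> A \<longrightarrow> marg f A e \<ge> 0)"

definition submodular :: "nat set \<Rightarrow> (nat set \<Rightarrow> real) \<Rightarrow> bool" where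
  "submodular V f \<longleftrightarrow> (\<forall>A B e. A \<subseteq> B \<longrightarrow> B \<subseteq> V \<longrightarrow> e \<in> V \<longrightarrow> e \<notin> B \<longrightarrow>
      marg f A e \<ge> marg f B e)"

definition OPT :: "nat set \<Rightarrow> (nat set \<Rightarrow> real) \<Rightarrow> nat \<Rightarrow> real" where
  "OPT V f k = Max {f A | A. A \<subseteq> V \<and> card A \<le> k}"

text \<open>ThresholdGreedy(T,G,tau): the fixed total order on V is given by the list vs;
  scan elements of T in that order.\<close>
definition threshold_greedy ::
  "(nat set \<Rightarrow> real) \<Rightarrow> nat \<Rightarrow> nat list \<Rightarrow> nat set \<Rightarrow> nat set \<Rightarrow> real \<Rightarrow> nat set" where
  "threshold_greedy f k vs T G \<tau> =
     foldl (\<lambda>G' e. if marg f G' e \<ge> \<tau> \<and> card G' < k then insert e G' else G')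
       G (filter (\<lambda>e. e \<in> T) vs)"

definition threshold_filter :: "(nat set \<Rightarrow> real) \<Rightarrow> nat set \<Rightarrow> nat set \<Rightarrow> real \<Rightarrow> nat set" where
  "threshold_filter f T G \<tau> = {e \<in> T. marg f G e \<ge> \<tau>}"

definition random_subset :: "nat set \<Rightarrow> real \<Rightarrow> nat set pmf" where
  "random_subset V p = map_pmf (\<lambda>g. {x \<in> V. g x}) (Pi_pmf V False (\<lambda>_. bernoulli_pmf p))"

text \<open>Number of elements sent to the central machine, given the sample S and the
  partition V_i = {e \<in> V. \<sigma> e = i}, i = 1..m.\<close>
definition sent_to_central ::
  "(nat set \<Rightarrow> real) \<Rightarrow> nat \<Rightarrow> nat list \<Rightarrow> nat \<Rightarrow> nat set \<Rightarrow> (nat \<Rightarrow> nat) \<Rightarrow> nat set" where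
  "sent_to_central f k vs m S \<sigma> =
     (let V = set vs; \<tau> = OPT V f k / (2 * real k);
          G0 = threshold_greedy f k vs S {} \<tau>;
          R = (\<lambda>i. if card G0 < k then threshold_filter f {e \<in> V. \<sigma> e = i} G0 \<tau> else {})
      in \<Union>i\<in>{1..m}. R i)"

end

theory Submission
  imports Defs
begin

fun run :: "(nat set \<Rightarrow> real) \<Rightarrow> nat \<Rightarrow> real \<Rightarrow> (nat \<Rightarrow> bool) \<Rightarrow> nat set \<Rightarrow> nat list \<Rightarrow> nat set \<times> nat \<times> nat set" where
  "run f k \<tau> g G [] = (G, 0, {})"
| "run f k \<tau> g G (x#xs) = (if \<tau> \<le> marg f G x \<and> card G < k then
     (if g x then (let r = run f k \<tau> g (insert x G) xs in (fst r, Suc (fst (snd r)), insert x (snd (snd r))))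
      else (let r = run f k \<tau> g G xs in (fst r, fst (snd r), insert x (snd (snd r)))))
   else run f k \<tau> g G xs)"

lemma run_cong: "(\<forall>y\<in>set xs. g y = g' y) \<Longrightarrow> run f k \<tau> g G xs = run f k \<tau> g' G xs"
  by (induction xs arbitrary: G) (auto simp: Let_def)

lemma pair_bern:
  assumes p: "0 \<le> p" "p \<le> 1"
  shows "measure_pmf.prob (pair_pmf (bernoulli_pmf p) N) {(b,g). if b then g \<in> E1 else g \<in> E2}
     = p * measure_pmf.prob N E1 + (1-p) * measure_pmf.prob N E2"
proof -
  let ?X = "{(b,g). if b then g \<in> E1 else g \<in> E2}"
  have ind: "indicator ?X (a, b) = (if a then indicator E1 b else indicator E2 b)" for a b
    by (auto simp: indicator_def)
  have "ennreal (measure_pmf.prob (pair_pmf (bernoulli_pmf p) N) ?X) = emeasure (measure_pmf (pair_pmf (bernoulli_pmf p) N)) ?X"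
    by (simp add: measure_pmf.emeasure_eq_measure)
  also have "\<dots> = (\<integral>\<^sup>+x. indicator ?X x \<partial>(pair_pmf (bernoulli_pmf p) N))"
    by simp
  also have "\<dots> = (\<integral>\<^sup>+a. \<integral>\<^sup>+b. indicator ?X (a,b) \<partial>N \<partial>bernoulli_pmf p)"
    by (rule nn_integral_pair_pmf')
  also have "\<dots> = (\<integral>\<^sup>+b. indicator E1 b \<partial>N) * ennreal p + (\<integral>\<^sup>+b. indicator E2 b \<partial>N) * ennreal (1-p)"
    unfolding ind using p by simp
  also have "\<dots> = ennreal (measure_pmf.prob N E1) * ennreal p + ennreal (measure_pmf.prob N E2) * ennreal (1-p)"
    by (simp add: measure_pmf.emeasure_eq_measure)
  also have "\<dots> = ennreal (p * measure_pmf.prob N E1 + (1-p) * measure_pmf.prob N E2)"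
    using p by (simp add: ennreal_mult' ennreal_plus mult.commute)
  finally show ?thesis using p by (subst (asm) ennreal_inj) auto
qed

lemma pair_const:
  "measure_pmf.prob (pair_pmf M N) {(b,g). g \<in> E} = measure_pmf.prob N E"
proof -
  have eq: "{(b,g). g \<in> E} = snd -` E" by auto
  have "measure_pmf.prob N E = measure_pmf.prob (map_pmf snd (pair_pmf M N)) E"
    by (subst map_snd_pair_pmf) (rule refl)
  also have "\<dots> = measure_pmf.prob (pair_pmf M N) (snd -` E)" by (rule measure_map_pmf)
  finally have "measure_pmf.prob N E = measure_pmf.prob (pair_pmf M N) (snd -` E)" .
  then show ?thesis unfolding eq by (rule sym)
qed

lemma card_insert_pred: "r \<le> card (insert x T) \<Longrightarrow> r - 1 \<le> card T"
  by (cases "finite T") (auto simp: card_insert_if split: if_splits)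

abbreviation "FB p j r \<equiv> (2::real)^j * (1 - p/2)^r"

lemma run_prob:
  assumes p: "0 \<le> p" "p \<le> 1" and "distinct xs"
  shows "measure_pmf.prob (Pi_pmf (set xs) False (\<lambda>_. bernoulli_pmf p))
     {g. fst (snd (run f k \<tau> g G xs)) < j \<and> r \<le> card (snd (snd (run f k \<tau> g G xs)))} \<le> FB p j r"
  using assms(3)
proof (induction xs arbitrary: G j r)
  case Nil
  show ?case
  proof (cases r)
    case 0
    have "(1::real) \<le> 2^j" by simp
    then show ?thesis using 0 measure_pmf.prob_le_1 order_trans by (simp; blast)
  next
    case (Suc r') then show ?thesis using p by simp
  qed
next
  case (Cons x xs)
  let ?M = "\<lambda>A. Pi_pmf A False (\<lambda>_. bernoulli_pmf p)"
  let ?E = "\<lambda>G j r. {g. fst (snd (run f k \<tau> g G xs)) < j \<and> r \<le> card (snd (snd (run f k \<tau> g G xs)))}"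
  have xn: "x \<notin> set xs" and dxs: "distinct xs" using Cons.prems by auto
  have ins: "?M (set (x#xs)) = map_pmf (\<lambda>(y,f). f(x:=y)) (pair_pmf (bernoulli_pmf p) (?M (set xs)))"
    using Pi_pmf_insert[of "set xs" x False "\<lambda>_. bernoulli_pmf p"] xn by simp
  have rc: "run f k \<tau> (g(x:=b)) G' xs = run f k \<tau> g G' xs" for g b G'
    by (rule run_cong) (use xn in auto)
  have pos: "0 \<le> FB p j r" for j r using p by simp
  show ?case
  proof (cases "j = 0")
    case True then show ?thesis using p by simp
  next
    case False
    then obtain j' where j: "j = Suc j'" by (cases j) auto
    show ?thesis
    proof (cases "\<tau> \<le> marg f G x \<and> card G < k")
      case gd: True
      have "(\<lambda>(y,f). f(x:=y)) -` {g. fst (snd (run f k \<tau> g G (x#xs))) < j \<and> r \<le> card (snd (snd (run f k \<tau> g G (x#xs))))}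
         \<subseteq> {(b,g). if b then g \<in> ?E (insert x G) j' (r - 1) else g \<in> ?E G j (r - 1)}"
        using gd j by (auto simp: rc Let_def dest: card_insert_pred split: if_splits)
      then have "measure_pmf.prob (?M (set (x#xs))) {g. fst (snd (run f k \<tau> g G (x#xs))) < j \<and> r \<le> card (snd (snd (run f k \<tau> g G (x#xs))))}
          \<le> measure_pmf.prob (pair_pmf (bernoulli_pmf p) (?M (set xs))) {(b,g). if b then g \<in> ?E (insert x G) j' (r - 1) else g \<in> ?E G j (r - 1)}"
        unfolding ins measure_map_pmf by (intro measure_pmf.finite_measure_mono) auto
      also have "\<dots> = p * measure_pmf.prob (?M (set xs)) (?E (insert x G) j' (r - 1)) + (1-p) * measure_pmf.prob (?M (set xs)) (?E G j (r - 1))"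
        by (rule pair_bern[OF p])
      also have "\<dots> \<le> p * FB p j' (r - 1) + (1-p) * FB p j (r - 1)"
        using Cons.IH[OF dxs] p by (intro add_mono mult_left_mono) auto
      also have "\<dots> \<le> FB p j r"
      proof -
        have "p * FB p j' (r - 1) + (1-p) * FB p j (r - 1) = 2^j' * (1 - p/2)^(r-1) * (p + 2*(1-p))"
          using j by (simp add: algebra_simps)
        also have "\<dots> = FB p j (r-1) * (1 - p/2)" using j by (simp add: algebra_simps)
        also have "\<dots> \<le> FB p j r"
        proof (cases r)
          case 0 then show ?thesis using p by (simp add: mult_left_le)
        next
          case (Suc r') then show ?thesis by (simp add: algebra_simps)
        qed
        finally show ?thesis .
      qed
      finally show ?thesis .
    next
      case ng: False
      have "(\<lambda>(y,f). f(x:=y)) -` {g. fst (snd (run f k \<tau> g G (x#xs))) < j \<and> r \<le> card (snd (snd (run f k \<tau> g G (x#xs))))}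
         = {(b,g). g \<in> ?E G j r}" (is "?L = _")
        using ng by (auto simp: rc)
      note pre = this
      have "measure_pmf.prob (?M (set (x#xs))) {g. fst (snd (run f k \<tau> g G (x#xs))) < j \<and> r \<le> card (snd (snd (run f k \<tau> g G (x#xs))))}
          = measure_pmf.prob (?M (set xs)) (?E G j r)"
        unfolding ins measure_map_pmf pre pair_const by (rule refl)
      also have "\<dots> \<le> FB p j r" using Cons.IH[OF dxs] .
      finally show ?thesis .
    qed
  qed
qed


lemma run_sub: "G \<subseteq> fst (run f k \<tau> g G xs) \<and> fst (run f k \<tau> g G xs) \<subseteq> G \<union> set xs
   \<and> snd (snd (run f k \<tau> g G xs)) \<subseteq> set xs"
proof (induction xs arbitrary: G)
  case (Cons a xs)
  from Cons.IH[of G] Cons.IH[of "insert a G"] show ?case by (auto simp: Let_def)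
qed simp

lemma run_card: "finite G \<Longrightarrow> distinct xs \<Longrightarrow> set xs \<inter> G = {} \<Longrightarrow>
   card (fst (run f k \<tau> g G xs)) = card G + fst (snd (run f k \<tau> g G xs))"
  by (induction xs arbitrary: G) (auto simp: Let_def)

lemma run_greedy: "foldl (\<lambda>G' e. if marg f G' e \<ge> \<tau> \<and> card G' < k then insert e G' else G')
       G (filter (\<lambda>e. e \<in> S) xs) = fst (run f k \<tau> (\<lambda>x. x \<in> S) G xs)"
  by (induction xs arbitrary: G) (auto simp: Let_def)

lemma run_good:
  assumes "finite G" "distinct xs" "set xs \<inter> G = {}" "G \<union> set xs \<subseteq> V" "submodular V f"
    "e \<in> set xs" "card (fst (run f k \<tau> g G xs)) < k" "\<tau> \<le> marg f (fst (run f k \<tau> g G xs)) e"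
  shows "e \<in> snd (snd (run f k \<tau> g G xs))"
  using assms
proof (induction xs arbitrary: G)
  case Nil then show ?case by simp
next
  case (Cons x xs)
  show ?case
  proof (cases "e = x")
    case True
    show ?thesis
    proof (cases "\<tau> \<le> marg f G x \<and> card G < k")
      case True then show ?thesis using \<open>e = x\<close> by (auto simp: Let_def)
    next
      case False
      have r: "run f k \<tau> g G (x#xs) = run f k \<tau> g G xs" by (subst run.simps) (simp only: False if_False)
      let ?Gf = "fst (run f k \<tau> g G xs)"
      have sub: "G \<subseteq> ?Gf" "?Gf \<subseteq> G \<union> set xs" using run_sub by blast+
      have fin: "finite ?Gf" using sub Cons.prems(1) finite_subset by blast
      show ?thesis
      proof (cases "card G < k")
        case False
        then have "k \<le> card ?Gf" using card_mono[OF fin sub(1)] by simp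
        then show ?thesis using Cons.prems(7) r by simp
      next
        case True
        with False have lt: "marg f G x < \<tau>" by simp
        have xn: "x \<notin> ?Gf" using sub(2) Cons.prems(2,3) by auto
        have GV: "?Gf \<subseteq> V" "x \<in> V" using sub Cons.prems(4) by auto
        have "marg f ?Gf x \<le> marg f G x"
          using Cons.prems(5) sub(1) GV xn unfolding submodular_def by blast
        then show ?thesis using lt Cons.prems(8) r \<open>e = x\<close> by simp
      qed
    qed
  next
    case False
    then have e: "e \<in> set xs" using Cons.prems(6) by simp
    have d: "distinct xs" "x \<notin> set xs" using Cons.prems(2) by auto
    show ?thesis
    proof (cases "\<tau> \<le> marg f G x \<and> card G < k")
      case gd: True
      show ?thesis
      proof (cases "g x")
        case True
        have "e \<in> snd (snd (run f k \<tau> g (insert x G) xs))"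
          using Cons.prems Cons.IH[of "insert x G"] e d gd True by (auto simp: Let_def)
        then show ?thesis using gd True by (simp add: Let_def)
      next
        case False
        have "e \<in> snd (snd (run f k \<tau> g G xs))"
          using Cons.prems Cons.IH[of G] e d gd False by (auto simp: Let_def)
        then show ?thesis using gd False by (simp add: Let_def)
      qed
    next
      case False
      then show ?thesis using Cons.prems Cons.IH[of G] e d by auto
    qed
  qed
qed


lemma final_bound:
  fixes n k :: nat
  assumes "k \<ge> 1" "16 * k \<le> n"
  defines "p \<equiv> 4 * sqrt (real k / real n)"
  shows "0 \<le> p" "p \<le> 1" "FB p k (nat \<lceil>sqrt (real n * real k)\<rceil>) \<le> exp (- 1 * real k)"
proof -
  have n: "real n > 0" using assms by simp
  have "real k / real n \<le> 1/16" using assms n by (simp add: field_simps)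
  then have "sqrt (real k / real n) \<le> sqrt (1/16)" by (rule real_sqrt_le_mono)
  also have "sqrt (1/16) = (1/4::real)" by (simp add: real_sqrt_divide)
  finally show p1: "p \<le> 1" unfolding p_def by simp
  show p0: "0 \<le> p" unfolding p_def by simp
  let ?N = "nat \<lceil>sqrt (real n * real k)\<rceil>"
  have N: "sqrt (real n * real k) \<le> real ?N" by linarith
  have pk: "p * sqrt (real n * real k) = 4 * real k"
  proof -
    have "sqrt (real k / real n) * sqrt (real n * real k) = sqrt (real k / real n * (real n * real k))"
      by (rule real_sqrt_mult[symmetric])
    also have "real k / real n * (real n * real k) = real k ^ 2" using n by (simp add: field_simps power2_eq_square)
    finally show ?thesis unfolding p_def by simp
  qed
  have "(1 - p/2) ^ ?N \<le> exp (- (p/2)) ^ ?N"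
    by (rule power_mono) (use exp_ge_add_one_self[of "-(p/2)"] p1 in auto)
  also have "\<dots> = exp (- (p/2) * real ?N)" by (simp add: exp_of_nat_mult[symmetric] mult.commute)
  also have "\<dots> \<le> exp (- (p/2) * sqrt (real n * real k))"
    using N p0 by (intro exp_le_cancel_iff[THEN iffD2]) (simp add: mult_left_mono)
  also have "\<dots> = exp (- 2 * real k)" using pk by (simp add: algebra_simps)
  finally have A: "(1 - p/2) ^ ?N \<le> exp (- 2 * real k)" .
  have "(2::real) ^ k \<le> exp 1 ^ k"
    by (rule power_mono) (use exp_ge_add_one_self[of 1] in auto)
  also have "\<dots> = exp (real k)" by (simp add: exp_of_nat_mult[symmetric])
  finally have B: "(2::real) ^ k \<le> exp (real k)" .
  have "FB p k ?N \<le> exp (real k) * exp (- 2 * real k)"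
    by (rule mult_mono[OF B A]) (use p1 in auto)
  also have "\<dots> = exp (- 1 * real k)" by (simp add: exp_add[symmetric])
  finally show "FB p k ?N \<le> exp (- 1 * real k)" .
qed

theorem lemma2:
  shows "\<exists>c::real. c > 0 \<and>
    (\<forall>(vs::nat list) (f::nat set \<Rightarrow> real) (k::nat) (m::nat) (P::(nat \<Rightarrow> nat) pmf).
      distinct vs \<longrightarrow> k \<ge> 1 \<longrightarrow> length vs \<ge> 16 * k \<longrightarrow>
      nonneg_on (set vs) f \<longrightarrow> monotone_set_fun (set vs) f \<longrightarrow> submodular (set vs) f \<longrightarrow>
      m \<ge> 1 \<longrightarrow> (\<forall>\<sigma>\<in>set_pmf P. \<forall>e\<in>set vs. \<sigma> e \<in> {1..m}) \<longrightarrow>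
      measure_pmf.prob
        (pair_pmf (random_subset (set vs) (4 * sqrt (real k / real (length vs)))) P)
        {(S, \<sigma>). real (card (sent_to_central f k vs m S \<sigma>)) \<le> sqrt (real (length vs) * real k)}
      \<ge> 1 - exp (- c * real k))"
proof (intro exI[of _ 1] conjI allI impI)
  fix vs :: "nat list" and f :: "nat set \<Rightarrow> real" and k m :: nat and P :: "(nat \<Rightarrow> nat) pmf"
  assume dist: "distinct vs" and k1: "k \<ge> 1" and nk: "length vs \<ge> 16 * k"
    and sub: "submodular (set vs) f"
  define n where "n = length vs"
  define p where "p = 4 * sqrt (real k / real n)"
  define V where "V = set vs"
  define \<tau> where "\<tau> = OPT V f k / (2 * real k)"
  define N where "N = nat \<lceil>sqrt (real n * real k)\<rceil>"
  have p0: "0 \<le> p" and p1: "p \<le> 1" and FBb: "FB p k N \<le> exp (- 1 * real k)"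
    using final_bound[OF k1 nk[folded n_def]] unfolding p_def N_def by auto
  define M where "M = Pi_pmf V False (\<lambda>_. bernoulli_pmf p)"
  define Ev where "Ev = {g. fst (snd (run f k \<tau> g {} vs)) < k \<and> N \<le> card (snd (snd (run f k \<tau> g {} vs)))}"
  define E where "E = {(S, \<sigma>). real (card (sent_to_central f k vs m S \<sigma>)) \<le> sqrt (real n * real k)}"
  have good: "({x \<in> V. g x}, \<sigma>) \<in> E" if gE: "g \<notin> Ev" for g \<sigma>
  proof -
    let ?S = "{x \<in> V. g x}"
    let ?R = "run f k \<tau> g {} vs"
    have G0: "threshold_greedy f k vs ?S {} \<tau> = fst ?R"
    proof -
      have "threshold_greedy f k vs ?S {} \<tau> = fst (run f k \<tau> (\<lambda>x. x \<in> ?S) {} vs)"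
        unfolding threshold_greedy_def by (rule run_greedy)
      also have "\<dots> = fst ?R" by (subst run_cong[where g' = g]) (auto simp: V_def)
      finally show ?thesis .
    qed
    have sdef: "sent_to_central f k vs m ?S \<sigma> = (\<Union>i\<in>{1..m}. if card (fst ?R) < k then
        threshold_filter f {e \<in> V. \<sigma> e = i} (fst ?R) \<tau> else {})"
      unfolding sent_to_central_def Let_def G0[unfolded \<tau>_def V_def] V_def \<tau>_def ..
    show ?thesis
    proof (cases "card (fst ?R) < k")
      case False
      then show ?thesis unfolding E_def using sdef by simp
    next
      case True
      have "sent_to_central f k vs m ?S \<sigma> \<subseteq> {e \<in> V. \<tau> \<le> marg f (fst ?R) e}"
        unfolding sdef using True by (auto simp: threshold_filter_def)
      also have "\<dots> \<subseteq> snd (snd ?R)"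
        using run_good[of "{}" vs V f e k \<tau> g for e] dist sub True by (auto simp: V_def)
      finally have ss: "sent_to_central f k vs m ?S \<sigma> \<subseteq> snd (snd ?R)" .
      have fT: "finite (snd (snd ?R))" using run_sub[of "{}" f k \<tau> g vs] finite_subset by blast
      have "fst (snd ?R) = card (fst ?R)" using run_card[of "{}" vs f k \<tau> g] dist by simp
      then have "card (snd (snd ?R)) < N" using gE True unfolding Ev_def by auto
      then have "card (sent_to_central f k vs m ?S \<sigma>) < N" using card_mono[OF fT ss] by simp
      then have "real (card (sent_to_central f k vs m ?S \<sigma>)) \<le> sqrt (real n * real k)"
        unfolding N_def by linarith
      then show ?thesis unfolding E_def by simp
    qed
  qed
  have rs: "random_subset V p = map_pmf (\<lambda>g. {x \<in> V. g x}) M"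
    unfolding random_subset_def M_def ..
  have "measure_pmf.prob (pair_pmf (random_subset V p) P) E
      = measure_pmf.prob (pair_pmf M P) (apfst (\<lambda>g. {x \<in> V. g x}) -` E)"
    unfolding rs pair_map_pmf1 measure_map_pmf ..
  also have "\<dots> \<ge> measure_pmf.prob (pair_pmf M P) (fst -` (- Ev))"
    using good by (intro measure_pmf.finite_measure_mono) auto
  also have "measure_pmf.prob (pair_pmf M P) (fst -` (- Ev)) = measure_pmf.prob M (- Ev)"
  proof -
    have "measure_pmf.prob M (- Ev) = measure_pmf.prob (map_pmf fst (pair_pmf M P)) (- Ev)"
      by (subst map_fst_pair_pmf) (rule refl)
    also have "\<dots> = measure_pmf.prob (pair_pmf M P) (fst -` (- Ev))" by (rule measure_map_pmf)
    finally show ?thesis ..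
  qed
  also have "measure_pmf.prob M (- Ev) = 1 - measure_pmf.prob M Ev"
    using measure_pmf.prob_compl[of Ev M] by (simp add: Compl_eq_Diff_UNIV)
  finally have L: "1 - measure_pmf.prob M Ev \<le> measure_pmf.prob (pair_pmf (random_subset V p) P) E" .
  have "measure_pmf.prob M Ev \<le> FB p k N"
    unfolding M_def Ev_def V_def by (rule run_prob[OF p0 p1 dist])
  with FBb L show "1 - exp (- 1 * real k) \<le> measure_pmf.prob
        (pair_pmf (random_subset (set vs) (4 * sqrt (real k / real (length vs)))) P)
        {(S, \<sigma>). real (card (sent_to_central f k vs m S \<sigma>)) \<le> sqrt (real (length vs) * real k)}"
    unfolding E_def p_def V_def n_def by linarith
qed simp

end
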